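(* For $k>3$ the Tanaka prolongation of the truncated double-graded free Lie algebra $\mathfrak{n}_k$ is supported in non-positive grading: $\hat{\mathfrak{n}}_k=\mathfrak{n}_k\oplus\mathfrak{g}_0$ with $\mathfrak{g}_0=\mathfrak{gl}(\mathfrak{g}_{-1})$.
   Context: The double-graded free Lie algebra with two-dimensional fundamental space is $\mathfrak{n}_\infty=\bigoplus_{i<0}\mathfrak{g}_i$ with $\mathfrak{g}_{-1}=\langle e_{10},e_{01}\rangle$, $e_{11}=[e_{10},e_{01}]$, and $\mathfrak{g}_{-j-1}=\langle e_{j,1},e_{j-1,2},\dots,e_{1,j}\rangle$, the only relations being $[e_{10},e_{i,j+1}]=[e_{01},e_{i+1,j}]=e_{i+1,j+1}$ (and $[e_{10},e_{i,j}]=e_{i+1,j}$, $[e_{01},e_{i,j}]=e_{i,j+1}$). The truncated algebra is $\mathfrak{n}_k=\mathfrak{g}_{-k}\oplus\dots\oplus\mathfrak{g}_{-1}$, with brackets between $\mathfrak{g}_{-i}$ and $\mathfrak{g}_{-j}$ zero when $i+j>k$. The Tanaka prolongation $\hat{\mathfrak{m}}=\bigoplus_i\mathfrak{g}_i$ of a fundamental graded nilpotent Lie algebra $\mathfrak{m}=\bigoplus_{i<0}\mathfrak{g}_i$ is the maximal graded Lie algebra whose negative part is $\mathfrak{m}$ and in which no nonzero element of non-negative degree commutes with all of $\mathfrak{g}_{-1}$; $\mathfrak{g}_0$ is the algebra of degree-zero derivations of $\mathfrak{m}$ (not required to preserve the splitting of $\mathfrak{g}_{-1}$), and $\mathfrak{g}_i$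 for $i>0$ is built successively. *)

theory Defs
  imports Main "HOL.Real"
begin

text \<open>An element of n_k is a coefficient function on index pairs (i,j); the basis
  vector e_ij has degree -(i+j).\<close>

type_synonym vec = "nat \<times> nat \<Rightarrow> real"

definition B :: "nat \<Rightarrow> (nat \<times> nat) set" where
  "B k = {(1,0),(0,1)} \<union> {(a,b). 1 \<le> a \<and> 1 \<le> b \<and> a + b \<le> k}"

text \<open>hom k n = the homogeneous component g_{-n} of n_k.\<close>
definition hom :: "nat \<Rightarrow> nat \<Rightarrow> vec set" where
  "hom k n = {v. \<forall>ij. v ij \<noteq> 0 \<longrightarrow> ij \<in> B k \<and> fst ij + snd ij = n}"

text \<open>The Lie bracket of n_k: [e10,e01] = e11, [e10,e_ab] = e_(a+1)b,
  [e01,e_ab] = e_a(b+1) (a,b>=1), all other brackets of basis vectors zero,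
  and everything of degree below -k truncated.\<close>
definition br :: "nat \<Rightarrow> vec \<Rightarrow> vec \<Rightarrow> vec" where
  "br k u v = (\<lambda>(i,j). if 1 \<le> i \<and> 1 \<le> j \<and> i + j \<le> k then
      (u (1,0) * v (i - 1, j) - v (1,0) * u (i - 1, j))
      + (if 2 \<le> j then u (0,1) * v (i, j - 1) - v (0,1) * u (i, j - 1) else 0)
    else 0)"

text \<open>Neg u is an element u of n_k;
  Der p f is an element of non-negative degree p, given by its graded action
  f i : g_{-i} \<rightarrow> (component of degree p - i), i = 1..k (values outside this
  domain are irrelevant).\<close>
datatype pe = Neg vec | Der nat "nat \<Rightarrow> vec \<Rightarrow> pe"

primrec padd :: "pe \<Rightarrow> pe \<Rightarrow> pe" where
  "padd (Neg u) Y = (case Y of Neg v \<Rightarrow> Neg (\<lambda>ij. u ij + v ij) | Der q g \<Rightarrow> Neg (\<lambda>_. 1))"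
| "padd (Der p f) Y = (case Y of Neg v \<Rightarrow> Neg (\<lambda>_. 1)
      | Der q g \<Rightarrow> (if p = q then Der p (\<lambda>i x. padd (f i x) (g i x)) else Neg (\<lambda>_. 1)))"

primrec psmul :: "real \<Rightarrow> pe \<Rightarrow> pe" where
  "psmul c (Neg u) = Neg (\<lambda>ij. c * u ij)"
| "psmul c (Der p f) = Der p (\<lambda>i x. psmul c (f i x))"

primrec is_zero :: "nat \<Rightarrow> pe \<Rightarrow> bool" where
  "is_zero k (Neg u) = (u = (\<lambda>_. 0))"
| "is_zero k (Der p f) = (\<forall>i\<in>{1..k}. \<forall>x\<in>hom k i. is_zero k (f i x))"

definition peq :: "nat \<Rightarrow> pe \<Rightarrow> pe \<Rightarrow> bool" where
  "peq k a b = is_zero k (padd a (psmul (-1) b))"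

text \<open>act k X j y = [X, y] for y in g_{-j}.\<close>
definition act :: "nat \<Rightarrow> pe \<Rightarrow> nat \<Rightarrow> vec \<Rightarrow> pe" where
  "act k X j y = (case X of Neg u \<Rightarrow> Neg (br k u y) | Der p f \<Rightarrow> f j y)"

definition lin_cond :: "nat \<Rightarrow> (nat \<Rightarrow> vec \<Rightarrow> pe) \<Rightarrow> bool" where
  "lin_cond k f = (\<forall>i\<in>{1..k}. \<forall>x\<in>hom k i. \<forall>y\<in>hom k i. \<forall>a b.
     peq k (f i (\<lambda>ij. a * x ij + b * y ij)) (padd (psmul a (f i x)) (psmul b (f i y))))"

definition leib_cond :: "nat \<Rightarrow> (nat \<Rightarrow> vec \<Rightarrow> pe) \<Rightarrow> bool" where
  "leib_cond k f = (\<forall>i\<in>{1..k}. \<forall>j\<in>{1..k}. \<forall>x\<in>hom k i. \<forall>y\<in>hom k j.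
     (let s = padd (act k (f i x) j y) (psmul (-1) (act k (f j y) i x)) in
       if i + j \<le> k then peq k (f (i + j) (br k x y)) s else is_zero k s))"

text \<open>inG k X d: X is an element of the degree-d component of the Tanaka
  prolongation of n_k (d < 0: the component g_d of n_k; d = p >= 0: the
  successively built component g_p).\<close>
primrec inG :: "nat \<Rightarrow> pe \<Rightarrow> int \<Rightarrow> bool" where
  "inG k (Neg u) d = (d < 0 \<and> u \<in> hom k (nat (- d)))"
| "inG k (Der p f) d = (d = int p
      \<and> (\<forall>i\<in>{1..k}. \<forall>x\<in>hom k i. inG k (f i x) (d - int i))
      \<and> lin_cond k f \<and> leib_cond k f)"

definition endo1 :: "nat \<Rightarrow> (vec \<Rightarrow> vec) \<Rightarrow> bool" where
  "endo1 k A = ((\<forall>x\<in>hom k 1. A x \<in> hom k 1) \<and>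
     (\<forall>x\<in>hom k 1. \<forall>y\<in>hom k 1. \<forall>a b. A (\<lambda>ij. a * x ij + b * y ij) = (\<lambda>ij. a * A x ij + b * A y ij)))"

end

theory Submission
  imports Defs
begin


lemma iz_cancel: "is_zero k (padd a (psmul c b)) \<Longrightarrow> is_zero k b \<Longrightarrow> is_zero k a"
proof (induction a arbitrary: b)
  case (Neg u) then show ?case by (cases b) (auto simp: fun_eq_iff)
next
  case (Der p f) 
  then obtain g where b: "b = Der p g" by (cases b) (auto simp: fun_eq_iff split: if_splits)
  show ?case using Der.prems unfolding b apply simp
    using Der.IH by (meson rangeI)
qed

lemma iz_cancel2: "is_zero k (padd a (psmul c b)) \<Longrightarrow> is_zero k a \<Longrightarrow> c \<noteq> 0 \<Longrightarrow> is_zero k b"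
proof (induction a arbitrary: b)
  case (Neg u) then show ?case by (cases b) (auto simp: fun_eq_iff)
next
  case (Der p f) 
  then obtain g where b: "b = Der p g" by (cases b) (auto simp: fun_eq_iff split: if_splits)
  show ?case using Der.prems unfolding b apply simp
    using Der.IH by (meson rangeI)
qed

lemma iz_comb: "inG k a d \<Longrightarrow> inG k b d \<Longrightarrow> is_zero k a \<Longrightarrow> is_zero k b \<Longrightarrow> is_zero k (padd (psmul c1 a) (psmul c2 b))"
proof (induction a arbitrary: b d)
  case (Neg u) then show ?case by (cases b) (auto simp: fun_eq_iff)
next
  case (Der p f) 
  then obtain g where b: "b = Der p g" by (cases b) (auto simp: fun_eq_iff split: if_splits)
  show ?case using Der.prems unfolding b apply simp
    using Der.IH by (meson rangeI)
qed

lemma iz_psmul0: "is_zero k (padd (psmul 0 a) (psmul 0 a))"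
  by (induction a) auto

lemma peq_refl: "peq k a a"
  unfolding peq_def by (induction a) (auto simp: fun_eq_iff)

lemma peq_sym: "peq k a b \<Longrightarrow> peq k b a"
  unfolding peq_def
proof (induction a arbitrary: b)
  case (Neg u) then show ?case by (cases b) (auto simp: fun_eq_iff)
next
  case (Der p f) 
  then obtain g where b: "b = Der p g" by (cases b) (auto simp: fun_eq_iff split: if_splits)
  show ?case using Der.prems unfolding b apply simp
    using Der.IH by (meson rangeI)
qed

lemma peq_trans: "peq k a b \<Longrightarrow> peq k b c \<Longrightarrow> peq k a c"
  unfolding peq_def
proof (induction a arbitrary: b c)
  case (Neg u) then show ?case by (cases b; cases c) (auto simp: fun_eq_iff)
next
  case (Der p f) 
  then obtain g where b: "b = Der p g" by (cases b) (auto simp: fun_eq_iff split: if_splits)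
  with Der obtain h where c: "c = Der p h" by (cases c) (auto simp: fun_eq_iff split: if_splits)
  show ?case using Der.prems unfolding b c apply simp
    using Der.IH by (meson rangeI)
qed

lemma peq_Neg[simp]: "peq k (Neg u) (Neg w) \<longleftrightarrow> u = w"
  unfolding peq_def by (auto simp: fun_eq_iff)

lemma peq_comb: "inG k a d \<Longrightarrow> inG k b d \<Longrightarrow> peq k a a' \<Longrightarrow> peq k b b' \<Longrightarrow>
   peq k (padd (psmul c1 a) (psmul c2 b)) (padd (psmul c1 a') (psmul c2 b'))"
  unfolding peq_def
proof (induction a arbitrary: b d a' b')
  case (Neg u) then show ?case by (cases b; cases a'; cases b') (auto simp: fun_eq_iff algebra_simps)
next
  case (Der p f) 
  then obtain g where b: "b = Der p g" by (cases b) (auto simp: fun_eq_iff split: if_splits)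
  with Der obtain f' where a': "a' = Der p f'" by (cases a') (auto simp: fun_eq_iff split: if_splits)
  with Der b obtain g' where b': "b' = Der p g'" by (cases b') (auto simp: fun_eq_iff split: if_splits)
  show ?case using Der.prems unfolding b a' b' apply simp
    using Der.IH by (meson rangeI)
qed

lemma peq_comb2: "inG k a d \<Longrightarrow> inG k b d \<Longrightarrow> peq k a a' \<Longrightarrow> peq k b b' \<Longrightarrow>
   peq k (padd a (psmul c b)) (padd a' (psmul c b'))"
  unfolding peq_def
proof (induction a arbitrary: b d a' b')
  case (Neg u) then show ?case by (cases b; cases a'; cases b') (auto simp: fun_eq_iff algebra_simps)
next
  case (Der p f) 
  then obtain g where b: "b = Der p g" by (cases b) (auto simp: fun_eq_iff split: if_splits)
  with Der obtain f' where a': "a' = Der p f'" by (cases a') (auto simp: fun_eq_iff split: if_splits)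
  with Der b obtain g' where b': "b' = Der p g'" by (cases b') (auto simp: fun_eq_iff split: if_splits)
  show ?case using Der.prems unfolding b a' b' apply simp
    using Der.IH by (meson rangeI)
qed




lemma B_mem[simp]: "(p,q) \<in> B k \<longleftrightarrow> (p = 1 \<and> q = 0) \<or> (p = 0 \<and> q = 1) \<or> (1 \<le> p \<and> 1 \<le> q \<and> p + q \<le> k)"
  by (auto simp: B_def)

lemma homD: "v \<in> hom k n \<Longrightarrow> v (p,q) \<noteq> 0 \<Longrightarrow> (p,q) \<in> B k \<and> p + q = n"
  unfolding hom_def by force

lemma homZ: "v \<in> hom k n \<Longrightarrow> \<not> ((p,q) \<in> B k \<and> p + q = n) \<Longrightarrow> v (p,q) = 0"
  using homD by blast

lemma homI: "(\<And>p q. v (p,q) \<noteq> 0 \<Longrightarrow> (p,q) \<in> B k \<and> p + q = n) \<Longrightarrow> v \<in> hom k n"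
  unfolding hom_def by auto

definition E :: "nat \<Rightarrow> nat \<Rightarrow> vec" where "E p q = (\<lambda>ij. if ij = (p,q) then 1 else 0)"

lemma E_app[simp]: "E p q (a,b) = (if a = p \<and> b = q then 1 else 0)" by (auto simp: E_def)

lemma E_hom: "(p,q) \<in> B k \<Longrightarrow> E p q \<in> hom k (p+q)"
  by (rule homI) (auto split: if_splits)

lemma zero_hom[simp]: "(\<lambda>_. 0) \<in> hom k n" by (rule homI) auto

lemma hom_lin: "x \<in> hom k n \<Longrightarrow> y \<in> hom k n \<Longrightarrow> (\<lambda>ij. a * x ij + b * y ij) \<in> hom k n"
proof (rule homI)
  fix p q assume "x \<in> hom k n" "y \<in> hom k n" "a * x (p,q) + b * y (p,q) \<noteq> 0"
  then have "x (p,q) \<noteq> 0 \<or> y (p,q) \<noteq> 0" by auto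
  then show "(p,q) \<in> B k \<and> p + q = n" using homD \<open>x \<in> hom k n\<close> \<open>y \<in> hom k n\<close> by blast
qed

lemma hom_big: "v \<in> hom k n \<Longrightarrow> n > k \<Longrightarrow> 1 \<le> k \<Longrightarrow> v = (\<lambda>_. 0)"
proof (rule ext, clarify)
  fix p q assume "v \<in> hom k n" "n > k" "1 \<le> k"
  show "v (p,q) = 0"
  proof (rule ccontr)
    assume "v (p,q) \<noteq> 0"
    from homD[OF \<open>v \<in> hom k n\<close> this] \<open>n > k\<close> \<open>1 \<le> k\<close> show False by auto
  qed
qed

lemma br_app: "br k u v (i,j) = (if 1 \<le> i \<and> 1 \<le> j \<and> i + j \<le> k then
      (u (1,0) * v (i - 1, j) - v (1,0) * u (i - 1, j))
      + (if 2 \<le> j then u (0,1) * v (i, j - 1) - v (0,1) * u (i, j - 1) else 0)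
    else 0)" by (simp add: br_def)

lemma br_hom: "u \<in> hom k i \<Longrightarrow> v \<in> hom k j \<Longrightarrow> br k u v \<in> hom k (i+j)"
proof (rule homI)
  fix p q assume u: "u \<in> hom k i" and v: "v \<in> hom k j" and ne: "br k u v (p,q) \<noteq> 0"
  from ne have r: "1 \<le> p \<and> 1 \<le> q \<and> p + q \<le> k" by (auto simp: br_app split: if_splits)
  have "p + q = i + j"
  proof (rule ccontr)
    assume "p + q \<noteq> i + j"
    note hu = homD[OF u] and hv = homD[OF v]
    have t1: "u (1,0) * v (p-1,q) = 0" using hu[of 1 0] hv[of "p-1" q] r \<open>p + q \<noteq> i + j\<close>
      by (cases "u (1,0) = 0"; cases "v (p-1,q) = 0") auto
    have t2: "v (1,0) * u (p-1,q) = 0" using hv[of 1 0] hu[of "p-1" q] r \<open>p + q \<noteq> i + j\<close>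
      by (cases "v (1,0) = 0"; cases "u (p-1,q) = 0") auto
    have t3: "2 \<le> q \<Longrightarrow> u (0,1) * v (p,q-1) = 0" using hu[of 0 1] hv[of p "q-1"] r \<open>p + q \<noteq> i + j\<close>
      by (cases "u (0,1) = 0"; cases "v (p,q-1) = 0") auto
    have t4: "2 \<le> q \<Longrightarrow> v (0,1) * u (p,q-1) = 0" using hv[of 0 1] hu[of p "q-1"] r \<open>p + q \<noteq> i + j\<close>
      by (cases "v (0,1) = 0"; cases "u (p,q-1) = 0") auto
    have "br k u v (p,q) = 0" unfolding br_app using t1 t2 t3 t4 by (simp del: mult_eq_0_iff)
    with ne show False by simp
  qed
  with r show "(p,q) \<in> B k \<and> p + q = i + j" by auto
qed

lemma br_ideal_zero: "u \<in> hom k i \<Longrightarrow> v \<in> hom k j \<Longrightarrow> 2 \<le> i \<Longrightarrow> 2 \<le> j \<Longrightarrow> br k u v = (\<lambda>_. 0)"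
proof (rule ext, clarify)
  fix p q assume u: "u \<in> hom k i" and v: "v \<in> hom k j" and ij: "2 \<le> i" "2 \<le> j"
  have "u (1,0) = 0" "u (0,1) = 0" "v (1,0) = 0" "v (0,1) = 0"
    using homZ[OF u] homZ[OF v] ij by auto
  then show "br k u v (p,q) = 0" by (simp add: br_app)
qed

lemma br_zero_left[simp]: "br k (\<lambda>_. 0) v = (\<lambda>_. 0)"
  by (auto simp: br_def fun_eq_iff)

lemma br_antisym: "br k u v = (\<lambda>ij. - br k v u ij)"
  by (auto simp: br_def fun_eq_iff)

lemma hom1_decomp: "x \<in> hom k 1 \<Longrightarrow> x = (\<lambda>ij. x (1,0) * E 1 0 ij + x (0,1) * E 0 1 ij)"
proof (rule ext, clarify)
  fix p q assume x: "x \<in> hom k 1"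
  show "x (p,q) = x (1,0) * E 1 0 (p,q) + x (0,1) * E 0 1 (p,q)"
  proof (cases "(p,q) = (1,0) \<or> (p,q) = (0,1)")
    case True then show ?thesis by auto
  next
    case False then have "x (p,q) = 0" using homZ[OF x] by auto
    with False show ?thesis by auto
  qed
qed

definition vv :: "pe \<Rightarrow> vec" where "vv X = (case X of Neg u \<Rightarrow> u | Der p f \<Rightarrow> (\<lambda>_. 0))"

lemma vv_Neg[simp]: "vv (Neg u) = u" by (simp add: vv_def)

lemma inG_neg: "inG k X d \<Longrightarrow> d < 0 \<Longrightarrow> X = Neg (vv X) \<and> vv X \<in> hom k (nat (-d))"
  by (cases X) auto

lemma inG_Der: "inG k X (int p) \<Longrightarrow> \<exists>f. X = Der p f"
  by (cases X) auto

lemma act_inG: "inG k X d \<Longrightarrow> j \<in> {1..k} \<Longrightarrow> y \<in> hom k j \<Longrightarrow> inG k (act k X j y) (d - int j)"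
proof (cases X)
  case (Neg u)
  assume a: "inG k X d" "j \<in> {1..k}" "y \<in> hom k j"
  with Neg have d: "d < 0" "u \<in> hom k (nat (-d))" by auto
  then have "nat (-(d - int j)) = nat (-d) + j" by linarith
  then show ?thesis using br_hom[OF d(2) a(3)] d Neg by (simp add: act_def)
qed (auto simp: act_def)

lemma act_zero: "is_zero k X \<Longrightarrow> j \<in> {1..k} \<Longrightarrow> y \<in> hom k j \<Longrightarrow> is_zero k (act k X j y)"
  by (cases X) (auto simp: act_def)

lemma act_peq: "peq k X Y \<Longrightarrow> j \<in> {1..k} \<Longrightarrow> y \<in> hom k j \<Longrightarrow> peq k (act k X j y) (act k Y j y)"
  apply (cases X; cases Y)
     apply (simp_all add: act_def peq_refl)
    apply (simp_all add: peq_def fun_eq_iff split: if_splits)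
  done




lemma decomp:
  assumes i: "2 \<le> i" and x: "x \<in> hom k i"
  shows "\<exists>y z. y \<in> hom k (i - 1) \<and> z \<in> hom k (i - 1) \<and>
     x = (\<lambda>ij. 1 * br k (E 1 0) y ij + 1 * br k (E 0 1) z ij)"
proof -
  define y :: vec where "y = (\<lambda>(p,q). if p \<ge> 1 then x (p+1,q) else if q = 1 then x (1,1) else (0::real))"
  define z :: vec where "z = (\<lambda>(p,q). if p = 1 \<and> q \<ge> 1 then x (1,q+1) else (0::real))"
  have y: "y \<in> hom k (i - 1)"
  proof (rule homI)
    fix p q assume ne: "y (p,q) \<noteq> 0"
    show "(p,q) \<in> B k \<and> p + q = i - 1"
    proof (cases "p \<ge> 1")
      case True then have "x (p+1,q) \<noteq> 0" using ne by (simp add: y_def)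
      from homD[OF x this] True i show ?thesis by auto
    next
      case False then have "q = 1" "x (1,1) \<noteq> 0" using ne by (auto simp: y_def split: if_splits)
      from homD[OF x this(2)] False \<open>q = 1\<close> show ?thesis by auto
    qed
  qed
  have z: "z \<in> hom k (i - 1)"
  proof (rule homI)
    fix p q assume ne: "z (p,q) \<noteq> 0"
    then have pq: "p = 1" "q \<ge> 1" "x (1,q+1) \<noteq> 0" by (auto simp: z_def split: if_splits)
    from homD[OF x pq(3)] pq show "(p,q) \<in> B k \<and> p + q = i - 1" by auto
  qed
  have y10: "y (1,0) = 0" using homZ[OF x, of "Suc (Suc 0)" 0] by (simp add: y_def)
  have y01: "y (0,1) = x (1,1)" by (simp add: y_def)
  have z10: "z (1,0) = 0" "z (0,1) = 0" by (auto simp: z_def)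
  have "x = (\<lambda>ij. 1 * br k (E 1 0) y ij + 1 * br k (E 0 1) z ij)"
  proof (rule ext, clarify)
    fix p q
    show "x (p,q) = 1 * br k (E 1 0) y (p,q) + 1 * br k (E 0 1) z (p,q)"
    proof (cases "1 \<le> p \<and> 1 \<le> q \<and> p + q \<le> k")
      case False
      have "x (p,q) = 0" by (rule homZ[OF x]) (use False i in auto)
      with False show ?thesis by (auto simp: br_app)
    next
      case True
      then show ?thesis
        using i by (cases "p = 1"; cases "q = 1") (auto simp: br_app y10 y01 z10 y_def z_def)
    qed
  qed
  with y z show ?thesis by blast
qed




lemma iz_comb2: "inG k a d \<Longrightarrow> inG k b d \<Longrightarrow> is_zero k a \<Longrightarrow> is_zero k b \<Longrightarrow> is_zero k (padd a (psmul c b))"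
proof (induction a arbitrary: b d)
  case (Neg u) then show ?case by (cases b) (auto simp: fun_eq_iff)
next
  case (Der p f) 
  then obtain g where b: "b = Der p g" by (cases b) (auto simp: fun_eq_iff split: if_splits)
  show ?case using Der.prems unfolding b apply simp
    using Der.IH by (meson rangeI)
qed

lemma E10_hom: "E 1 0 \<in> hom k 1" using E_hom[of 1 0 k] by simp
lemma E01_hom: "E 0 1 \<in> hom k 1" using E_hom[of 0 1 k] by simp

lemma lin_at: "lin_cond k f \<Longrightarrow> i \<in> {1..k} \<Longrightarrow> x \<in> hom k i \<Longrightarrow> y \<in> hom k i \<Longrightarrow>
  peq k (f i (\<lambda>ij. a * x ij + b * y ij)) (padd (psmul a (f i x)) (psmul b (f i y)))"
  unfolding lin_cond_def by blast

lemma leib_at: "leib_cond k f \<Longrightarrow> i \<in> {1..k} \<Longrightarrow> j \<in> {1..k} \<Longrightarrow> x \<in> hom k i \<Longrightarrow> y \<in> hom k j \<Longrightarrow>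
  (if i + j \<le> k then peq k (f (i + j) (br k x y)) (padd (act k (f i x) j y) (psmul (-1) (act k (f j y) i x)))
   else is_zero k (padd (act k (f i x) j y) (psmul (-1) (act k (f j y) i x))))"
  unfolding leib_cond_def Let_def by blast

lemma leib_step:
  assumes X: "inG k (Der p f) (int p)" and i: "2 \<le> i" "i \<le> k" and e: "e \<in> hom k 1" and y: "y \<in> hom k (i - 1)"
  shows "peq k (f i (br k e y)) (padd (act k (f 1 e) (i - 1) y) (psmul (-1) (act k (f (i - 1) y) 1 e)))"
    and "inG k (act k (f 1 e) (i - 1) y) (int p - int i)"
    and "inG k (act k (f (i - 1) y) 1 e) (int p - int i)"
proof -
  from X have fi: "\<forall>i\<in>{1..k}. \<forall>x\<in>hom k i. inG k (f i x) (int p - int i)" and L: "leib_cond k f" by auto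
  have ii: "1 + (i - 1) = i" "i - 1 \<in> {1..k}" "1 \<in> {1..k}" using i by auto
  then show "peq k (f i (br k e y)) (padd (act k (f 1 e) (i - 1) y) (psmul (-1) (act k (f (i - 1) y) 1 e)))"
    using leib_at[OF L, of 1 "i - 1" e y] i e y by (simp only: if_True)
  have "inG k (f 1 e) (int p - int 1)" using bspec[OF bspec[OF fi, of 1] e] i by auto
  from act_inG[OF this ii(2) y] i y show "inG k (act k (f 1 e) (i - 1) y) (int p - int i)" by (simp add: of_nat_diff)
  have "inG k (f (i - 1) y) (int p - int (i - 1))" using bspec[OF bspec[OF fi ii(2)] y] by auto
  from act_inG[OF this ii(3) e] i e show "inG k (act k (f (i - 1) y) 1 e) (int p - int i)" by (simp add: of_nat_diff)
qed

lemma det_peq: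
  assumes X: "inG k (Der p f) (int p)" and Y: "inG k (Der p g) (int p)"
    and base: "\<forall>x\<in>hom k 1. peq k (f 1 x) (g 1 x)"
  shows "peq k (Der p f) (Der p g)"
proof -
  from X have fi: "\<forall>i\<in>{1..k}. \<forall>x\<in>hom k i. inG k (f i x) (int p - int i)" and Lf: "lin_cond k f" by auto
  from Y have gi: "\<forall>i\<in>{1..k}. \<forall>x\<in>hom k i. inG k (g i x) (int p - int i)" and Lg: "lin_cond k g" by auto
  have main: "\<forall>x\<in>hom k i. peq k (f i x) (g i x)" if "1 \<le> i" "i \<le> k" for i
    using that
  proof (induction i rule: less_induct)
    case (less i)
    show ?case
    proof (cases "i = 1")
      case True then show ?thesis using base by simp
    next
      case False
      with less.prems have i: "2 \<le> i" "i \<le> k" by auto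
      have IH: "\<forall>x\<in>hom k (i - 1). peq k (f (i - 1) x) (g (i - 1) x)"
        using less.IH[of "i - 1"] i by auto
      have step: "peq k (f i (br k e y)) (g i (br k e y))" if e: "e \<in> hom k 1" and y: "y \<in> hom k (i - 1)" for e y
      proof -
        note sf = leib_step[OF X i e y] and sg = leib_step[OF Y i e y]
        have "peq k (padd (act k (f 1 e) (i - 1) y) (psmul (-1) (act k (f (i - 1) y) 1 e)))
                    (padd (act k (g 1 e) (i - 1) y) (psmul (-1) (act k (g (i - 1) y) 1 e)))"
          apply (rule peq_comb2[OF sf(2) sf(3)])
           apply (rule act_peq) using base e y i apply auto[3]
          apply (rule act_peq) using IH e y i by auto
        then show ?thesis using sf(1) sg(1) by (meson peq_sym peq_trans)
      qed
      show ?thesis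
      proof
        fix x assume x: "x \<in> hom k i"
        obtain y z where y: "y \<in> hom k (i - 1)" and z: "z \<in> hom k (i - 1)"
          and xe: "x = (\<lambda>ij. 1 * br k (E 1 0) y ij + 1 * br k (E 0 1) z ij)"
          using decomp[OF i(1) x] by blast
        have P: "br k (E 1 0) y \<in> hom k i" using br_hom[OF E10_hom y] i by simp
        have Q: "br k (E 0 1) z \<in> hom k i" using br_hom[OF E01_hom z] i by simp
        have i1: "i \<in> {1..k}" using i by auto
        have "peq k (padd (psmul 1 (f i (br k (E 1 0) y))) (psmul 1 (f i (br k (E 0 1) z))))
                    (padd (psmul 1 (g i (br k (E 1 0) y))) (psmul 1 (g i (br k (E 0 1) z))))"
          apply (rule peq_comb)
          using fi P Q i1 step[OF E10_hom y] step[OF E01_hom z] by auto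
        then show "peq k (f i x) (g i x)"
          using lin_at[OF Lf i1 P Q, of 1 1] lin_at[OF Lg i1 P Q, of 1 1] xe
          by (metis peq_sym peq_trans)
      qed
    qed
  qed
  then show ?thesis unfolding peq_def by simp
qed

lemma det_zero:
  assumes X: "inG k (Der p f) (int p)"
    and base: "\<forall>x\<in>hom k 1. is_zero k (f 1 x)"
  shows "is_zero k (Der p f)"
proof -
  from X have fi: "\<forall>i\<in>{1..k}. \<forall>x\<in>hom k i. inG k (f i x) (int p - int i)" and Lf: "lin_cond k f" by auto
  have main: "\<forall>x\<in>hom k i. is_zero k (f i x)" if "1 \<le> i" "i \<le> k" for i
    using that
  proof (induction i rule: less_induct)
    case (less i)
    show ?case
    proof (cases "i = 1")
      case True then show ?thesis using base by simp
    next
      case False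
      with less.prems have i: "2 \<le> i" "i \<le> k" by auto
      have IH: "\<forall>x\<in>hom k (i - 1). is_zero k (f (i - 1) x)"
        using less.IH[of "i - 1"] i by auto
      have step: "is_zero k (f i (br k e y))" if e: "e \<in> hom k 1" and y: "y \<in> hom k (i - 1)" for e y
      proof -
        note sf = leib_step[OF X i e y]
        have "is_zero k (padd (act k (f 1 e) (i - 1) y) (psmul (-1) (act k (f (i - 1) y) 1 e)))"
          apply (rule iz_comb2[OF sf(2) sf(3)])
           apply (rule act_zero) using base e y i apply auto[3]
          apply (rule act_zero) using IH e y i by auto
        then show ?thesis using sf(1) unfolding peq_def by (rule iz_cancel[rotated])
      qed
      show ?thesis
      proof
        fix x assume x: "x \<in> hom k i"
        obtain y z where y: "y \<in> hom k (i - 1)" and z: "z \<in> hom k (i - 1)"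
          and xe: "x = (\<lambda>ij. 1 * br k (E 1 0) y ij + 1 * br k (E 0 1) z ij)"
          using decomp[OF i(1) x] by blast
        have P: "br k (E 1 0) y \<in> hom k i" using br_hom[OF E10_hom y] i by simp
        have Q: "br k (E 0 1) z \<in> hom k i" using br_hom[OF E01_hom z] i by simp
        have i1: "i \<in> {1..k}" using i by auto
        have "is_zero k (padd (psmul 1 (f i (br k (E 1 0) y))) (psmul 1 (f i (br k (E 0 1) z))))"
          apply (rule iz_comb)
          using fi P Q i1 step[OF E10_hom y] step[OF E01_hom z] by auto
        then show "is_zero k (f i x)"
          using lin_at[OF Lf i1 P Q, of 1 1] xe unfolding peq_def
          by (metis iz_cancel)
      qed
    qed
  qed
  then show ?thesis by simp
qed




definition Mop :: "real \<Rightarrow> real \<Rightarrow> real \<Rightarrow> real \<Rightarrow> vec \<Rightarrow> vec" where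
  "Mop a b c d v = (\<lambda>(p,q). if p = 1 \<and> q = 0 then a * v (1,0) + c * v (0,1)
     else if p = 0 \<and> q = 1 then b * v (1,0) + d * v (0,1)
     else (real p * a + real q * d) * v (p,q) + real p * b * v (p+1, q-1) + real q * c * v (p-1, q+1))"

lemma Mop_app: "Mop a b c d v (p,q) = (if p = 1 \<and> q = 0 then a * v (1,0) + c * v (0,1)
     else if p = 0 \<and> q = 1 then b * v (1,0) + d * v (0,1)
     else (real p * a + real q * d) * v (p,q) + real p * b * v (p+1, q-1) + real q * c * v (p-1, q+1))"
  by (simp add: Mop_def)

lemma Mop_lin: "Mop a b c d (\<lambda>ij. \<alpha> * x ij + \<beta> * y ij) = (\<lambda>ij. \<alpha> * Mop a b c d x ij + \<beta> * Mop a b c d y ij)"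
  by (auto simp: fun_eq_iff Mop_def algebra_simps)

lemma Mop_hom: assumes v: "v \<in> hom k n" shows "Mop a b c d v \<in> hom k n"
proof (rule homI)
  fix p q assume ne: "Mop a b c d v (p,q) \<noteq> 0"
  note hv = homD[OF v]
  show "(p,q) \<in> B k \<and> p + q = n"
  proof (cases "p = 1 \<and> q = 0 \<or> p = 0 \<and> q = 1")
    case True
    then have "v (1,0) \<noteq> 0 \<or> v (0,1) \<noteq> 0" using ne by (auto simp: Mop_app)
    then have "n = 1" using hv by fastforce
    with True show ?thesis by auto
  next
    case False
    then have "v (p,q) \<noteq> 0 \<or> (p \<noteq> 0 \<and> v (p+1,q-1) \<noteq> 0) \<or> (q \<noteq> 0 \<and> v (p-1,q+1) \<noteq> 0)"
      using ne by (auto simp: Mop_app)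
    then show ?thesis
    proof (elim disjE conjE)
      assume "v (p,q) \<noteq> 0" then show ?thesis using hv by blast
    next
      assume "p \<noteq> 0" "v (p+1,q-1) \<noteq> 0"
      from hv[OF this(2)] this(1) show ?thesis by auto
    next
      assume "q \<noteq> 0" "v (p-1,q+1) \<noteq> 0"
      from hv[OF this(2)] this(1) show ?thesis by auto
    qed
  qed
qed




lemma homD2: "v \<in> hom k n \<Longrightarrow> 2 \<le> n \<Longrightarrow> v (p,q) \<noteq> 0 \<Longrightarrow> 1 \<le> p \<and> 1 \<le> q \<and> p + q = n \<and> n \<le> k"
  using homD[of v k n p q] by auto

lemma homZ2: "v \<in> hom k n \<Longrightarrow> 2 \<le> n \<Longrightarrow> \<not> (1 \<le> p \<and> 1 \<le> q \<and> p + q = n \<and> n \<le> k) \<Longrightarrow> v (p,q) = 0"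
  using homD2 by blast

lemma hom1Z: "x \<in> hom k 1 \<Longrightarrow> \<not> (p = 1 \<and> q = 0) \<Longrightarrow> \<not> (p = 0 \<and> q = 1) \<Longrightarrow> x (p,q) = 0"
  by (cases "x (p,q) = 0") (use homD[of x k 1 p q] in auto)

lemma br1:
  assumes x: "x \<in> hom k 1" and y: "y \<in> hom k j" and j: "2 \<le> j" "j + 1 \<le> k"
  shows "br k x y = (\<lambda>(p,q). x (1,0) * y (p-1,q) + x (0,1) * y (p,q-1))"
proof (rule ext, clarify)
  fix p q
  have y10: "y (Suc 0,0) = 0" "y (0,Suc 0) = 0" using homZ2[OF y j(1)] by auto
  show "br k x y (p,q) = x (1,0) * y (p-1,q) + x (0,1) * y (p,q-1)"
  proof (cases "1 \<le> p \<and> 1 \<le> q \<and> p + q \<le> k")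
    case True
    then show ?thesis
    proof (cases "q = 1")
      case True
      then have "y (p, q - 1) = 0" using homZ2[OF y j(1)] by auto
      with True \<open>1 \<le> p \<and> 1 \<le> q \<and> p + q \<le> k\<close> show ?thesis by (simp add: br_app y10)
    qed (simp add: br_app y10)
  next
    case False
    have "y (p-1,q) = 0" using homD2[OF y j(1), of "p-1" q] False j by (cases "y (p-1,q) = 0") auto
    moreover have "y (p,q-1) = 0" using homD2[OF y j(1), of p "q-1"] False j by (cases "y (p,q-1) = 0") auto
    ultimately show ?thesis using False by (auto simp: br_app)
  qed
qed

lemma Mop_closed:
  assumes v: "v \<in> hom k n" and n: "2 \<le> n"
  shows "Mop a b c d v = (\<lambda>(p,q). (real p * a + real q * d) * v (p,q) + real p * b * v (p+1, q-1) + real q * c * v (p-1, q+1))"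
proof (rule ext, clarify)
  fix p q
  have "v (1,0) = 0" "v (0,1) = 0" "v (2,0) = 0" "v (0,2) = 0" using homZ2[OF v n] by auto
  then show "Mop a b c d v (p,q) = (real p * a + real q * d) * v (p,q) + real p * b * v (p+1, q-1) + real q * c * v (p-1, q+1)"
    by (auto simp: Mop_app numeral_2_eq_2)
qed

lemma Mop_leib12:
  assumes x: "x \<in> hom k 1" and y: "y \<in> hom k j" and j: "2 \<le> j" "j + 1 \<le> k"
  shows "Mop a b c d (br k x y) = (\<lambda>ij. br k (Mop a b c d x) y ij + -1 * br k (Mop a b c d y) x ij)"
proof -
  have Mx: "Mop a b c d x \<in> hom k 1" by (rule Mop_hom[OF x])
  have My: "Mop a b c d y \<in> hom k j" by (rule Mop_hom[OF y])
  have w: "br k x y \<in> hom k (1 + j)" by (rule br_hom[OF x y])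
  have n2: "2 \<le> 1 + j" using j by simp
  note e1 = Mop_closed[OF w n2, of a b c d]
  note e2 = br1[OF x y j]
  note e3 = br1[OF Mx y j]
  note e4 = br_antisym[of k "Mop a b c d y" x]
  note e5 = br1[OF x My j]
  note e6 = Mop_closed[OF y j(1), of a b c d]
  have Mx10: "Mop a b c d x (Suc 0,0) = a * x (Suc 0,0) + c * x (0,Suc 0)" "Mop a b c d x (0,Suc 0) = b * x (Suc 0,0) + d * x (0,Suc 0)"
    by (auto simp: Mop_app)
  have y0: "\<And>s. y (0,s) = 0" "\<And>r. y (r,0) = 0" using homZ2[OF y j(1)] by auto
  show ?thesis
  proof (rule ext, clarify)
    fix p q
    show "Mop a b c d (br k x y) (p,q) = br k (Mop a b c d x) y (p,q) + -1 * br k (Mop a b c d y) x (p,q)"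
      apply (simp only: e1 e3 e4 e5)
      apply (simp only: e2 e6 case_prod_conv)
      apply (cases p; cases q)
      apply (simp_all add: y0 Mx10 algebra_simps)
      done
  qed
qed

lemma Mop_leib11_aux:
  "Mop a b c d (br k (\<lambda>ij. s1 * E 1 0 ij + s2 * E 0 1 ij) (\<lambda>ij. t1 * E 1 0 ij + t2 * E 0 1 ij))
   = (\<lambda>ij. br k (Mop a b c d (\<lambda>ij. s1 * E 1 0 ij + s2 * E 0 1 ij)) (\<lambda>ij. t1 * E 1 0 ij + t2 * E 0 1 ij) ij
       + -1 * br k (Mop a b c d (\<lambda>ij. t1 * E 1 0 ij + t2 * E 0 1 ij)) (\<lambda>ij. s1 * E 1 0 ij + s2 * E 0 1 ij) ij)"
  apply (rule ext, clarify)
  apply (simp add: Mop_app br_app)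
  apply (auto simp: algebra_simps)
  apply (rename_tac n, subgoal_tac "n = 1", simp, linarith)
  done

lemma Mop_leib11:
  assumes x: "x \<in> hom k 1" and y: "y \<in> hom k 1"
  shows "Mop a b c d (br k x y) = (\<lambda>ij. br k (Mop a b c d x) y ij + -1 * br k (Mop a b c d y) x ij)"
  using Mop_leib11_aux[of a b c d k "x (1,0)" "x (0,1)" "y (1,0)" "y (0,1)"]
  by (simp only: hom1_decomp[OF x, symmetric] hom1_decomp[OF y, symmetric])

lemma Mop_neg: "Mop a b c d (\<lambda>ij. - v ij) = (\<lambda>ij. - Mop a b c d v ij)"
  by (auto simp: fun_eq_iff Mop_def algebra_simps)

lemma Mop_zero[simp]: "Mop a b c d (\<lambda>_. 0) = (\<lambda>_. 0)"
  by (auto simp: fun_eq_iff Mop_def)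

lemma Mop_leib:
  assumes x: "x \<in> hom k i" and y: "y \<in> hom k j" and ij: "1 \<le> i" "1 \<le> j" "i + j \<le> k"
  shows "Mop a b c d (br k x y) = (\<lambda>ij. br k (Mop a b c d x) y ij + -1 * br k (Mop a b c d y) x ij)"
proof -
  consider "i = 1" "j = 1" | "i = 1" "2 \<le> j" | "2 \<le> i" "j = 1" | "2 \<le> i" "2 \<le> j" using ij by linarith
  then show ?thesis
  proof cases
    case 1 then show ?thesis using Mop_leib11 x y by simp
  next
    case 2 then show ?thesis using Mop_leib12[of x k y j] x y ij by simp
  next
    case 3
    have "Mop a b c d (br k y x) = (\<lambda>ij. br k (Mop a b c d y) x ij + -1 * br k (Mop a b c d x) y ij)"
      using Mop_leib12[of y k x i] x y ij 3 by simp
    moreover have "Mop a b c d (br k x y) = (\<lambda>ij. - Mop a b c d (br k y x) ij)"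
      by (subst br_antisym) (rule Mop_neg)
    ultimately show ?thesis by (simp add: fun_eq_iff)
  next
    case 4
    have "br k x y = (\<lambda>_. 0)" by (rule br_ideal_zero[OF x y 4])
    moreover have "br k (Mop a b c d x) y = (\<lambda>_. 0)" by (rule br_ideal_zero[OF Mop_hom[OF x] y 4])
    moreover have "br k (Mop a b c d y) x = (\<lambda>_. 0)" by (rule br_ideal_zero[OF Mop_hom[OF y] x 4(2) 4(1)])
    ultimately show ?thesis by simp
  qed
qed

lemma br_big: "u \<in> hom k i \<Longrightarrow> v \<in> hom k j \<Longrightarrow> k < i + j \<Longrightarrow> 1 \<le> k \<Longrightarrow> br k u v = (\<lambda>_. 0)"
  using br_hom hom_big by blast

definition XM :: "real \<Rightarrow> real \<Rightarrow> real \<Rightarrow> real \<Rightarrow> pe" where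
  "XM a b c d = Der 0 (\<lambda>i x. Neg (Mop a b c d x))"

lemma XM_inG: assumes k: "1 \<le> k" shows "inG k (XM a b c d) 0"
proof -
  have "lin_cond k (\<lambda>i x. Neg (Mop a b c d x))"
    unfolding lin_cond_def by (simp add: Mop_lin)
  moreover have "leib_cond k (\<lambda>i x. Neg (Mop a b c d x))"
    unfolding leib_cond_def Let_def
  proof (intro ballI)
    fix i j x y assume i: "i \<in> {1..k}" and j: "j \<in> {1..k}" and x: "x \<in> hom k i" and y: "y \<in> hom k j"
    show "if i + j \<le> k
          then peq k (Neg (Mop a b c d (br k x y)))
                 (padd (act k (Neg (Mop a b c d x)) j y) (psmul (- 1) (act k (Neg (Mop a b c d y)) i x)))
          else is_zero k (padd (act k (Neg (Mop a b c d x)) j y) (psmul (- 1) (act k (Neg (Mop a b c d y)) i x)))"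
    proof (cases "i + j \<le> k")
      case True then show ?thesis using Mop_leib[OF x y] i j by (simp add: act_def)
    next
      case False
      then show ?thesis using br_big[OF Mop_hom[OF x] y] br_big[OF Mop_hom[OF y] x] k
        by (simp add: act_def add.commute)
    qed
  qed
  moreover have "\<forall>i\<in>{1..k}. \<forall>x\<in>hom k i. inG k (Neg (Mop a b c d x)) (0 - int i)"
    using Mop_hom by auto
  ultimately show ?thesis unfolding XM_def by simp
qed




lemma inG1: "inG k (Der p f) (int p) \<Longrightarrow> i \<in> {1..k} \<Longrightarrow> x \<in> hom k i \<Longrightarrow> inG k (f i x) (int p - int i)"
  by auto

lemma L0:
  assumes D: "inG k (Der 0 g) 0" and k: "1 \<le> k"
  shows "\<forall>j\<in>{1..k}. \<forall>y\<in>hom k j. g j y = Neg (Mop (vv (g 1 (E 1 0)) (1,0)) (vv (g 1 (E 1 0)) (0,1))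
                                                 (vv (g 1 (E 0 1)) (1,0)) (vv (g 1 (E 0 1)) (0,1)) y)"
proof -
  define a where "a = vv (g 1 (E 1 0)) (1,0)"
  define b where "b = vv (g 1 (E 1 0)) (0,1)"
  define c where "c = vv (g 1 (E 0 1)) (1,0)"
  define d where "d = vv (g 1 (E 0 1)) (0,1)"
  have D': "inG k (Der 0 g) (int 0)" using D by simp
  have k1: "1 \<in> {1..k}" using k by simp
  have neg: "g i x = Neg (vv (g i x)) \<and> vv (g i x) \<in> hom k i" if "i \<in> {1..k}" "x \<in> hom k i" for i x
    using inG_neg[OF inG1[OF D' that]] that by auto
  from D have Lg: "lin_cond k g" by simp
  have base: "\<forall>x\<in>hom k 1. peq k (g 1 x) (Neg (Mop a b c d x))"
  proof
    fix x assume x: "x \<in> hom k 1"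
    have u1: "g 1 (E 1 0) = Neg (vv (g 1 (E 1 0)))" "vv (g 1 (E 1 0)) \<in> hom k 1" using neg[OF k1 E10_hom] by auto
    have u2: "g 1 (E 0 1) = Neg (vv (g 1 (E 0 1)))" "vv (g 1 (E 0 1)) \<in> hom k 1" using neg[OF k1 E01_hom] by auto
    have gx: "g 1 x = Neg (vv (g 1 x))" using neg[OF k1 x] by auto
    have "peq k (g 1 x) (padd (psmul (x (1,0)) (g 1 (E 1 0))) (psmul (x (0,1)) (g 1 (E 0 1))))"
      using lin_at[OF Lg k1 E10_hom E01_hom, of "x (1,0)" "x (0,1)"] hom1_decomp[OF x] by simp
    then have vx: "vv (g 1 x) = (\<lambda>ij. x (1,0) * vv (g 1 (E 1 0)) ij + x (0,1) * vv (g 1 (E 0 1)) ij)"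
      by (subst (asm) u1(1), subst (asm) u2(1), subst (asm) gx) simp
    have "vv (g 1 x) = Mop a b c d x"
    proof (rule ext, clarify)
      fix p q
      show "vv (g 1 x) (p,q) = Mop a b c d x (p,q)"
      proof (cases "p = 1 \<and> q = 0 \<or> p = 0 \<and> q = 1")
        case True then show ?thesis unfolding vx by (auto simp: Mop_app a_def b_def c_def d_def algebra_simps)
      next
        case False
        then have "Mop a b c d x (p,q) = 0" using hom1Z[OF Mop_hom[OF x]] by auto
        moreover have "vv (g 1 (E 1 0)) (p,q) = 0" "vv (g 1 (E 0 1)) (p,q) = 0"
          using hom1Z[OF u1(2)] hom1Z[OF u2(2)] False by auto
        ultimately show ?thesis unfolding vx by simp
      qed
    qed
    then show "peq k (g 1 x) (Neg (Mop a b c d x))" by (subst gx) simp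
  qed
  have XD: "inG k (Der 0 (\<lambda>i x. Neg (Mop a b c d x))) (int 0)" using XM_inG[OF k] by (simp add: XM_def)
  have "peq k (Der 0 g) (Der 0 (\<lambda>i x. Neg (Mop a b c d x)))"
    by (rule det_peq[OF D' XD]) (use base in simp)
  then have "\<forall>j\<in>{1..k}. \<forall>y\<in>hom k j. peq k (g j y) (Neg (Mop a b c d y))"
    unfolding peq_def by simp
  then show ?thesis unfolding a_def[symmetric] b_def[symmetric] c_def[symmetric] d_def[symmetric]
    using neg by (metis peq_Neg)
qed

lemma part3:
  assumes X: "inG k X 0" and Y: "inG k Y 0" and agree: "\<forall>x\<in>hom k 1. peq k (act k X 1 x) (act k Y 1 x)"
  shows "peq k X Y"
proof -
  obtain f where f: "X = Der 0 f" using inG_Der[of k X 0] X by auto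
  obtain g where g: "Y = Der 0 g" using inG_Der[of k Y 0] Y by auto
  show ?thesis unfolding f g
    by (rule det_peq) (use X Y agree f g in \<open>auto simp: act_def\<close>)
qed

lemma part2:
  assumes k: "1 \<le> k" and A: "endo1 k A"
  shows "\<exists>X. inG k X 0 \<and> (\<forall>x\<in>hom k 1. peq k (act k X 1 x) (Neg (A x)))"
proof -
  define a where "a = A (E 1 0) (1,0)"
  define b where "b = A (E 1 0) (0,1)"
  define c where "c = A (E 0 1) (1,0)"
  define d where "d = A (E 0 1) (0,1)"
  from A have Ah: "\<forall>x\<in>hom k 1. A x \<in> hom k 1"
    and Al: "\<forall>x\<in>hom k 1. \<forall>y\<in>hom k 1. \<forall>a b. A (\<lambda>ij. a * x ij + b * y ij) = (\<lambda>ij. a * A x ij + b * A y ij)"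
    unfolding endo1_def by auto
  have "A x = Mop a b c d x" if x: "x \<in> hom k 1" for x
  proof -
    have Ax: "A x = (\<lambda>ij. x (1,0) * A (E 1 0) ij + x (0,1) * A (E 0 1) ij)"
      using Al E10_hom E01_hom hom1_decomp[OF x] by metis
    have h1: "A (E 1 0) \<in> hom k 1" "A (E 0 1) \<in> hom k 1" using Ah E10_hom E01_hom by auto
    show ?thesis
    proof (rule ext, clarify)
      fix p q
      show "A x (p,q) = Mop a b c d x (p,q)"
      proof (cases "p = 1 \<and> q = 0 \<or> p = 0 \<and> q = 1")
        case True then show ?thesis by (auto simp: Ax Mop_app a_def b_def c_def d_def algebra_simps)
      next
        case False
        then have "Mop a b c d x (p,q) = 0" using hom1Z[OF Mop_hom[OF x]] by auto
        moreover have "A (E 1 0) (p,q) = 0" "A (E 0 1) (p,q) = 0"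
          using hom1Z[OF h1(1)] hom1Z[OF h1(2)] False by auto
        ultimately show ?thesis by (simp add: Ax)
      qed
    qed
  qed
  then show ?thesis
  proof (intro exI conjI)
    show "inG k (XM a b c d) 0" by (rule XM_inG[OF k])
  qed (simp add: XM_def act_def)
qed




definition Xc :: "real \<Rightarrow> real \<Rightarrow> real \<Rightarrow> nat \<Rightarrow> vec" where
  "Xc a b d n = (\<lambda>(p,q). if p = n - 1 \<and> q = 1 then a * real n * (real n - 1) / 2 + (real n - 1) * d
     else if p = n - 2 \<and> q = 2 then b * (real n - 1) * (real n - 2) / 2 else 0)"

lemma br_E10: "br k u (E 1 0) (p,q) = (if 1 \<le> p \<and> 1 \<le> q \<and> p + q \<le> k then - u (p-1,q) else 0)"
  by (simp add: br_app)

lemma br_E01: "br k u (E 0 1) (p,q) = (if 1 \<le> p \<and> 1 \<le> q \<and> p + q \<le> k then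
    (if p = 1 \<and> q = 1 then u (1,0) else 0) - (if 2 \<le> q then u (p,q-1) else 0) else 0)"
  by (auto simp: br_app)

lemma Mop_En1: "1 \<le> n \<Longrightarrow> Mop a b c d (E n 1) (p,q) =
  (if p = n \<and> q = 1 then real n * a + d else if p + 1 = n \<and> q = 2 then real p * b else 0)"
  by (auto simp: Mop_app)

lemma Mop_E1n: "1 \<le> n \<Longrightarrow> Mop a b c d (E 1 n) (p,q) =
  (if p = 1 \<and> q = n then a + real n * d else if p = 2 \<and> q + 1 = n then real q * c else 0)"
  by (auto simp: Mop_app)

lemma chain_id:
  assumes n: "1 \<le> n" "n + 1 \<le> k"
  shows "(\<lambda>ij. Mop a b c d (E n 1) ij + -1 * br k (Xc a b d n) (E 1 0) ij) = Xc a b d (n+1)"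
proof (rule ext, clarify)
  fix p q
  show "Mop a b c d (E n 1) (p,q) + -1 * br k (Xc a b d n) (E 1 0) (p,q) = Xc a b d (n+1) (p,q)"
    unfolding Mop_En1[OF n(1)] br_E10
  proof -
    consider (A) "p = n \<and> q = 1" | (B) "p + 1 = n \<and> q = 2" | (C) "\<not>(p = n \<and> q = 1)" "\<not>(p + 1 = n \<and> q = 2)"
      by blast
    then show "(if p = n \<and> q = 1 then real n * a + d else if p + 1 = n \<and> q = 2 then real p * b else 0) +
         -1 * (if 1 \<le> p \<and> 1 \<le> q \<and> p + q \<le> k then - Xc a b d n (p - 1, q) else 0) = Xc a b d (n + 1) (p, q)"
    proof cases
      case A
      then show ?thesis using n by (simp add: Xc_def field_simps)
    next
      case B
      show ?thesis
      proof (cases "p = 0")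
        case True then show ?thesis using B by (simp add: Xc_def)
      next
        case False
        have e: "n = Suc p" using B by auto
        have h1: "Xc a b d n (p - 1, q) = b * (real n - 1) * (real n - 2) / 2"
          using B False by (simp add: Xc_def e)
        have h2: "Xc a b d (n+1) (p, q) = b * (real (n+1) - 1) * (real (n+1) - 2) / 2"
          using B by (simp add: Xc_def e)
        show ?thesis using B False n unfolding h1 h2
          by (simp add: e field_simps)
      qed
    next
      case C
      have r: "Xc a b d (n+1) (p,q) = 0" using C n by (auto simp: Xc_def)
      have l: "1 \<le> p \<Longrightarrow> Xc a b d n (p - 1, q) = 0" using C n by (auto simp: Xc_def)
      show ?thesis using C r l by auto
    qed
  qed
qed

definition Yc :: "real \<Rightarrow> real \<Rightarrow> real \<Rightarrow> nat \<Rightarrow> vec" where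
  "Yc a c d n = (\<lambda>(p,q). if p = 1 \<and> q = n - 1 then d * real n * (real n - 1) / 2 + (real n - 1) * a
     else if p = 2 \<and> q = n - 2 then c * (real n - 1) * (real n - 2) / 2 else 0)"

lemma Yc10: "1 \<le> n \<Longrightarrow> Yc a c d n (1,0) = 0"
  by (cases "n = 1") (auto simp: Yc_def)

lemma chain_id2:
  assumes n: "1 \<le> n" "n + 1 \<le> k"
  shows "(\<lambda>ij. Mop a b c d (E 1 n) ij + -1 * br k (Yc a c d n) (E 0 1) ij) = Yc a c d (n+1)"
proof (rule ext, clarify)
  fix p q
  show "Mop a b c d (E 1 n) (p,q) + -1 * br k (Yc a c d n) (E 0 1) (p,q) = Yc a c d (n+1) (p,q)"
    unfolding Mop_E1n[OF n(1)] br_E01 Yc10[OF n(1)]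
  proof -
    consider (A) "p = 1 \<and> q = n" | (B) "p = 2 \<and> q + 1 = n" | (C) "\<not>(p = 1 \<and> q = n)" "\<not>(p = 2 \<and> q + 1 = n)"
      by blast
    then show "(if p = 1 \<and> q = n then a + real n * d else if p = 2 \<and> q + 1 = n then real q * c else 0) +
      -1 * (if 1 \<le> p \<and> 1 \<le> q \<and> p + q \<le> k
            then (if p = 1 \<and> q = 1 then 0 else 0) - (if 2 \<le> q then Yc a c d n (p, q - 1) else 0) else 0) =
      Yc a c d (n + 1) (p, q)"
    proof cases
      case A
      show ?thesis
      proof (cases "n = 1")
        case True then show ?thesis using A n by (simp add: Yc_def)
      next
        case False
        have h1: "Yc a c d n (p, q - 1) = d * real n * (real n - 1) / 2 + (real n - 1) * a"
          using A by (simp add: Yc_def)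
        have h2: "Yc a c d (n+1) (p, q) = d * real (n+1) * (real (n+1) - 1) / 2 + (real (n+1) - 1) * a"
          using A by (simp add: Yc_def)
        show ?thesis using A False n unfolding h1 h2 by (simp add: field_simps)
      qed
    next
      case B
      show ?thesis
      proof (cases "q \<le> 1")
        case True then show ?thesis using B by (cases "q = 0") (auto simp: Yc_def)
      next
        case False
        have e: "n = Suc q" using B by auto
        have h1: "Yc a c d n (p, q - 1) = c * (real n - 1) * (real n - 2) / 2"
          using B False by (simp add: Yc_def e)
        have h2: "Yc a c d (n+1) (p, q) = c * (real (n+1) - 1) * (real (n+1) - 2) / 2"
          using B by (simp add: Yc_def e)
        show ?thesis using B False n unfolding h1 h2
          by (simp add: e field_simps)
      qed
    next
      case C
      have r: "Yc a c d (n+1) (p,q) = 0" using C n by (auto simp: Yc_def)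
      have l: "2 \<le> q \<Longrightarrow> Yc a c d n (p, q - 1) = 0" using C n by (auto simp: Yc_def)
      show ?thesis using C r l by auto
    qed
  qed
qed




lemma fneg:
  assumes X: "inG k (Der 1 f) (int 1)" and i: "2 \<le> i" "i \<le> k" and x: "x \<in> hom k i"
  shows "f i x = Neg (vv (f i x)) \<and> vv (f i x) \<in> hom k (i - 1)"
proof -
  have "inG k (f i x) (int 1 - int i)" using X i x by auto
  from inG_neg[OF this] i show ?thesis by (simp add: nat_diff_distrib)
qed

lemma leibA:
  assumes X: "inG k (Der 1 f) (int 1)" and e: "e \<in> hom k 1" and fe: "f 1 e = Der 0 g"
    and G: "\<forall>j\<in>{1..k}. \<forall>y\<in>hom k j. g j y = Neg (Mop a b c d y)"
    and j: "2 \<le> j" "j \<le> k" and y: "y \<in> hom k j"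
  shows "j + 1 \<le> k \<Longrightarrow> vv (f (j+1) (br k e y)) = (\<lambda>ij. Mop a b c d y ij + -1 * br k (vv (f j y)) e ij)"
    and "k < j + 1 \<Longrightarrow> (\<lambda>ij. Mop a b c d y ij + -1 * br k (vv (f j y)) e ij) = (\<lambda>_. 0)"
proof -
  from X have L: "leib_cond k f" by simp
  have j1: "1 \<in> {1..k}" "j \<in> {1..k}" using j by auto
  have a1: "act k (f 1 e) j y = Neg (Mop a b c d y)" using G j1 y fe by (simp add: act_def)
  have fy: "f j y = Neg (vv (f j y))" using fneg[OF X j y] by simp
  have a2: "act k (f j y) 1 e = Neg (br k (vv (f j y)) e)" by (subst fy) (simp add: act_def)
  have s: "padd (act k (f 1 e) j y) (psmul (-1) (act k (f j y) 1 e)) = Neg (\<lambda>ij. Mop a b c d y ij + -1 * br k (vv (f j y)) e ij)"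
    unfolding a1 a2 by simp
  note LA = leib_at[OF L j1 e y]
  {
    assume jk: "j + 1 \<le> k"
    have w: "br k e y \<in> hom k (j+1)" using br_hom[OF e y] by simp
    have fw: "f (j+1) (br k e y) = Neg (vv (f (j+1) (br k e y)))" using fneg[OF X _ jk w] j by simp
    from LA jk have "peq k (f (1 + j) (br k e y)) (Neg (\<lambda>ij. Mop a b c d y ij + -1 * br k (vv (f j y)) e ij))"
      unfolding s by simp
    then show "vv (f (j+1) (br k e y)) = (\<lambda>ij. Mop a b c d y ij + -1 * br k (vv (f j y)) e ij)"
      using fw by (metis add.commute peq_Neg)
  }
  {
    assume jk: "k < j + 1"
    from LA jk have "is_zero k (Neg (\<lambda>ij. Mop a b c d y ij + -1 * br k (vv (f j y)) e ij))"
      unfolding s by simp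
    then show "(\<lambda>ij. Mop a b c d y ij + -1 * br k (vv (f j y)) e ij) = (\<lambda>_. 0)" by simp
  }
qed

lemma brEE: "2 \<le> k \<Longrightarrow> br k (E 1 0) (E 0 1) = E 1 1"
  by (auto simp: fun_eq_iff br_app)

lemma brE10n: "1 \<le> n \<Longrightarrow> n + 2 \<le> k \<Longrightarrow> br k (E 1 0) (E n 1) = E (n+1) 1"
  by (auto simp: fun_eq_iff br_app)

lemma brE01n: "1 \<le> n \<Longrightarrow> n + 2 \<le> k \<Longrightarrow> br k (E 0 1) (E 1 n) = E 1 (n+1)"
  by (auto simp: fun_eq_iff br_app)

lemma solve2:
  fixes K a d b' :: real
  assumes K: "K \<ge> 4"
    and e1: "a * K * (K - 1) / 2 + (K - 1) * d = 0"
    and e2: "(K - 2) * b' + (a * (K - 1) * (K - 2) / 2 + (K - 2) * d) = 0"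
    and e3: "b' = d"
  shows "a = 0 \<and> d = 0"
proof -
  have "(K - 1) * (a * K + 2 * d) = 2 * (a * K * (K - 1) / 2 + (K - 1) * d)" by (simp add: field_simps)
  with e1 K have f1: "a * K + 2 * d = 0" by simp
  have "(K - 2) * (4 * d + a * (K - 1)) = 2 * ((K - 2) * b' + (a * (K - 1) * (K - 2) / 2 + (K - 2) * d))"
    using e3 by (simp add: field_simps)
  with e2 K have f2: "4 * d + a * (K - 1) = 0" by simp
  from f1 f2 have "a * (K + 1) = 0" by (simp add: algebra_simps)
  with K have "a = 0" by simp
  with f1 show ?thesis by simp
qed

lemma g1_zero:
  assumes X: "inG k (Der 1 f) (int 1)" and k: "4 \<le> k"
  shows "is_zero k (Der 1 f)"
proof -
  have k1: "1 \<in> {1..k}" and k2: "2 \<in> {1..k}" and k3: "3 \<in> {1..k}" using k by auto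
  have i1: "inG k (f 1 (E 1 0)) 0" using inG1[OF X k1 E10_hom] by simp
  then obtain g1 where fe1: "f 1 (E 1 0) = Der 0 g1" using inG_Der[of k _ 0] by auto
  have D1: "inG k (Der 0 g1) 0" using i1 fe1 by simp
  have i2: "inG k (f 1 (E 0 1)) 0" using inG1[OF X k1 E01_hom] by simp
  then obtain g2 where fe2: "f 1 (E 0 1) = Der 0 g2" using inG_Der[of k _ 0] by auto
  have D2: "inG k (Der 0 g2) 0" using i2 fe2 by simp
  define a1 where "a1 = vv (g1 1 (E 1 0)) (1,0)"
  define b1 where "b1 = vv (g1 1 (E 1 0)) (0,1)"
  define c1 where "c1 = vv (g1 1 (E 0 1)) (1,0)"
  define d1 where "d1 = vv (g1 1 (E 0 1)) (0,1)"
  define a2 where "a2 = vv (g2 1 (E 1 0)) (1,0)"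
  define b2 where "b2 = vv (g2 1 (E 1 0)) (0,1)"
  define c2 where "c2 = vv (g2 1 (E 0 1)) (1,0)"
  define d2 where "d2 = vv (g2 1 (E 0 1)) (0,1)"
  have G1: "\<forall>j\<in>{1..k}. \<forall>y\<in>hom k j. g1 j y = Neg (Mop a1 b1 c1 d1 y)"
    using L0[OF D1] k unfolding a1_def b1_def c1_def d1_def by simp
  have G2: "\<forall>j\<in>{1..k}. \<forall>y\<in>hom k j. g2 j y = Neg (Mop a2 b2 c2 d2 y)"
    using L0[OF D2] k unfolding a2_def b2_def c2_def d2_def by simp
  from X have L: "leib_cond k f" and Lf: "lin_cond k f" by auto
  have E11: "E 1 1 \<in> hom k 2" using E_hom[of 1 1 k] k by (simp add: numeral_2_eq_2)
  have E12: "E 1 2 \<in> hom k 3" using E_hom[of 1 2 k] k by (simp add: numeral_3_eq_3)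
  define v where "v = vv (f 2 (E 1 1))"
  have fv: "f 2 (E 1 1) = Neg v" "v \<in> hom k 1" using fneg[OF X _ _ E11] k unfolding v_def by auto
  have "peq k (f (1 + 1) (br k (E 1 0) (E 0 1)))
      (padd (act k (f 1 (E 1 0)) 1 (E 0 1)) (psmul (-1) (act k (f 1 (E 0 1)) 1 (E 1 0))))"
    using leib_at[OF L k1 k1 E10_hom E01_hom] k by simp
  then have "v = (\<lambda>ij. Mop a1 b1 c1 d1 (E 0 1) ij + -1 * Mop a2 b2 c2 d2 (E 1 0) ij)"
    using brEE[of k] k fv(1) fe1 fe2 G1 G2 k1 E10_hom E01_hom by (simp add: act_def numeral_2_eq_2)
  then have v10: "v (1,0) = c1 - a2" "v (0,1) = d1 - b2" by (simp_all add: Mop_app)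
  define w where "w = vv (f 3 (E 1 2))"
  have fw: "f 3 (E 1 2) = Neg w" "w \<in> hom k 2" using fneg[OF X _ _ E12] k unfolding w_def by auto
  have s: "padd (act k (f 2 (E 1 1)) 3 (E 1 2)) (psmul (-1) (act k (f 3 (E 1 2)) 2 (E 1 1)))
           = Neg (br k v (E 1 2))"
    using fv fw br_ideal_zero[OF fw(2) E11] by (simp add: act_def)
  have izs: "is_zero k (Neg (br k v (E 1 2)))"
  proof (cases "2 + 3 \<le> k")
    case True
    have k5: "5 \<in> {1..k}" using True by simp
    have z5: "is_zero k (f 5 (\<lambda>_. 0))"
    proof -
      have "peq k (f 5 (\<lambda>ij. 0 * (\<lambda>_. 0) ij + 0 * (\<lambda>_. 0) ij)) (padd (psmul 0 (f 5 (\<lambda>_. 0))) (psmul 0 (f 5 (\<lambda>_. 0))))"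
        by (rule lin_at[OF Lf k5 zero_hom zero_hom])
      then show ?thesis unfolding peq_def by simp (rule iz_cancel, assumption, rule iz_psmul0)
    qed
    have "peq k (f (2 + 3) (br k (E 1 1) (E 1 2))) (Neg (br k v (E 1 2)))"
      using leib_at[OF L k2 k3 E11 E12] True unfolding s by simp
    then have "peq k (f 5 (\<lambda>_. 0)) (Neg (br k v (E 1 2)))"
      using br_ideal_zero[OF E11 E12] by simp
    then show ?thesis using z5 unfolding peq_def by (rule iz_cancel2) simp
  next
    case False
    then show ?thesis using leib_at[OF L k2 k3 E11 E12] unfolding s by simp
  qed
  then have "br k v (E 1 2) (2,2) = 0" "br k v (E 1 2) (1,3) = 0" by simp_all
  then have "v (1,0) = 0" "v (0,1) = 0" using k by (simp_all add: br_app)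
  with v10 have rel: "c1 = a2" "d1 = b2" by simp_all
  have v0: "v = (\<lambda>_. 0)" using hom1_decomp[OF fv(2)] \<open>v (1,0) = 0\<close> \<open>v (0,1) = 0\<close> by simp
  have chain: "vv (f (n+1) (E n 1)) = Xc a1 b1 d1 n" if "1 \<le> n" "n + 1 \<le> k" for n
    using that
  proof (induction n)
    case 0 then show ?case by simp
  next
    case (Suc m)
    show ?case
    proof (cases "m = 0")
      case True
      have "Xc a1 b1 d1 1 = (\<lambda>_. 0)" by (auto simp: Xc_def fun_eq_iff)
      then show ?thesis using True v0 unfolding v_def by (simp add: numeral_2_eq_2)
    next
      case False
      have IH: "vv (f (m+1) (E m 1)) = Xc a1 b1 d1 m" using Suc False by simp
      have y: "E m 1 \<in> hom k (m+1)" using E_hom[of m 1 k] Suc False by simp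
      have "vv (f (m+1+1) (br k (E 1 0) (E m 1))) = Xc a1 b1 d1 (m+1)"
        using leibA(1)[OF X E10_hom fe1 G1 _ _ y] Suc False chain_id[of m k a1 b1 c1 d1]
        unfolding IH by simp
      then show ?thesis using brE10n[of m k] Suc False by simp
    qed
  qed
  have chain2: "vv (f (n+1) (E 1 n)) = Yc a2 c2 d2 n" if "1 \<le> n" "n + 1 \<le> k" for n
    using that
  proof (induction n)
    case 0 then show ?case by simp
  next
    case (Suc m)
    show ?case
    proof (cases "m = 0")
      case True
      have "Yc a2 c2 d2 1 = (\<lambda>_. 0)" by (auto simp: Yc_def fun_eq_iff)
      then show ?thesis using True v0 unfolding v_def by (simp add: numeral_2_eq_2)
    next
      case False
      have IH: "vv (f (m+1) (E 1 m)) = Yc a2 c2 d2 m" using Suc False by simp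
      have y: "E 1 m \<in> hom k (m+1)" using E_hom[of 1 m k] Suc False by (simp add: add.commute)
      have "vv (f (m+1+1) (br k (E 0 1) (E 1 m))) = Yc a2 c2 d2 (m+1)"
        using leibA(1)[OF X E01_hom fe2 G2 _ _ y] Suc False chain_id2[of m k a2 b2 c2 d2]
        unfolding IH by simp
      then show ?thesis using brE01n[of m k] Suc False by simp
    qed
  qed
  have nk: "k - 1 + 1 = k" "1 \<le> k - 1" "k - 2 + 1 = k - 1" "k - 2 \<noteq> k - 1" "1 \<le> k - 2" "k - 2 + 2 \<le> k"
    "k - 1 - 1 = k - 2" "2 \<le> k" using k by auto
  have yk: "E (k-1) 1 \<in> hom k k" using E_hom[of "k-1" 1 k] k by simp
  have yk2: "E 1 (k-1) \<in> hom k k" using E_hom[of 1 "k-1" k] k by simp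
  have ck: "vv (f k (E (k-1) 1)) = Xc a1 b1 d1 (k-1)" using chain[of "k-1"] nk by simp
  have ck2: "vv (f k (E 1 (k-1))) = Yc a2 c2 d2 (k-1)" using chain2[of "k-1"] nk by simp
  have "Xc a1 b1 d1 k = (\<lambda>_. 0)"
    using leibA(2)[OF X E10_hom fe1 G1 _ _ yk] chain_id[of "k-1" k a1 b1 c1 d1] nk unfolding ck by simp
  then have t1: "Xc a1 b1 d1 k (k-1,1) = 0" "Xc a1 b1 d1 k (k-2,2) = 0" by simp_all
  have "Yc a2 c2 d2 k = (\<lambda>_. 0)"
    using leibA(2)[OF X E01_hom fe2 G2 _ _ yk2] chain_id2[of "k-1" k a2 b2 c2 d2] nk unfolding ck2 by simp
  then have t2: "Yc a2 c2 d2 k (1,k-1) = 0" "Yc a2 c2 d2 k (2,k-2) = 0" by simp_all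
  have "(\<lambda>ij. Mop a2 b2 c2 d2 (E (k-1) 1) ij + -1 * br k (Xc a1 b1 d1 (k-1)) (E 0 1) ij) = (\<lambda>_. 0)"
    using leibA(2)[OF X E01_hom fe2 G2 _ _ yk] nk unfolding ck by simp
  then have "Mop a2 b2 c2 d2 (E (k-1) 1) (k-2,2) + -1 * br k (Xc a1 b1 d1 (k-1)) (E 0 1) (k-2,2) = 0"
    by (drule_tac x="(k-2,2)" in fun_cong) simp
  moreover have "Mop a2 b2 c2 d2 (E (k-1) 1) (k-2,2) = real (k-2) * b2"
    using Mop_En1[OF nk(2), of a2 b2 c2 d2 "k-2" 2] nk by simp
  moreover have "br k (Xc a1 b1 d1 (k-1)) (E 0 1) (k-2,2) = - Xc a1 b1 d1 (k-1) (k-2,1)"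
    using br_E01[of k _ "k-2" 2] nk by simp
  moreover have "Xc a1 b1 d1 (k-1) (k-2,1) = a1 * real (k-1) * (real (k-1) - 1) / 2 + (real (k-1) - 1) * d1"
    using nk by (simp add: Xc_def)
  ultimately have t3: "(real k - 2) * b2 + (a1 * (real k - 1) * (real k - 2) / 2 + (real k - 2) * d1) = 0"
    using k by (simp add: of_nat_diff)
  have "(\<lambda>ij. Mop a1 b1 c1 d1 (E 1 (k-1)) ij + -1 * br k (Yc a2 c2 d2 (k-1)) (E 1 0) ij) = (\<lambda>_. 0)"
    using leibA(2)[OF X E10_hom fe1 G1 _ _ yk2] nk unfolding ck2 by simp
  then have "Mop a1 b1 c1 d1 (E 1 (k-1)) (2,k-2) + -1 * br k (Yc a2 c2 d2 (k-1)) (E 1 0) (2,k-2) = 0"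
    by (drule_tac x="(2,k-2)" in fun_cong) simp
  moreover have "Mop a1 b1 c1 d1 (E 1 (k-1)) (2,k-2) = real (k-2) * c1"
    using Mop_E1n[OF nk(2), of a1 b1 c1 d1 2 "k-2"] nk by simp
  moreover have "br k (Yc a2 c2 d2 (k-1)) (E 1 0) (2,k-2) = - Yc a2 c2 d2 (k-1) (1,k-2)"
    using br_E10[of k _ 2 "k-2"] nk by simp
  moreover have "Yc a2 c2 d2 (k-1) (1,k-2) = d2 * real (k-1) * (real (k-1) - 1) / 2 + (real (k-1) - 1) * a2"
    using nk by (simp add: Yc_def)
  ultimately have t4: "(real k - 2) * c1 + (d2 * (real k - 1) * (real k - 2) / 2 + (real k - 2) * a2) = 0"
    using k by (simp add: of_nat_diff)
  define K where "K = real k"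
  have K4: "K \<ge> 4" using k unfolding K_def by simp
  have u1: "a1 * K * (K - 1) / 2 + (K - 1) * d1 = 0" using t1(1) unfolding K_def by (simp add: Xc_def)
  have u2: "b1 * (K - 1) * (K - 2) / 2 = 0" using t1(2) nk unfolding K_def by (simp add: Xc_def of_nat_diff)
  have u3: "d2 * K * (K - 1) / 2 + (K - 1) * a2 = 0" using t2(1) unfolding K_def by (simp add: Yc_def)
  have u4: "c2 * (K - 1) * (K - 2) / 2 = 0" using t2(2) nk unfolding K_def by (simp add: Yc_def of_nat_diff)
  have "a1 = 0 \<and> d1 = 0" by (rule solve2[OF K4 u1]) (use t3 rel in \<open>simp_all add: K_def\<close>)
  moreover have "d2 = 0 \<and> a2 = 0" by (rule solve2[OF K4 u3]) (use t4 rel in \<open>simp_all add: K_def\<close>)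
  moreover have "b1 = 0" using u2 K4 by simp
  moreover have "c2 = 0" using u4 K4 by simp
  ultimately have z: "a1 = 0" "b1 = 0" "c1 = 0" "d1 = 0" "a2 = 0" "b2 = 0" "c2 = 0" "d2 = 0"
    using rel by auto
  have Mop00: "\<And>y. Mop 0 0 0 0 y = (\<lambda>_. 0)" by (auto simp: Mop_def fun_eq_iff)
  have iz1: "is_zero k (f 1 (E 1 0))" unfolding fe1 using G1 z Mop00 by simp
  have iz2: "is_zero k (f 1 (E 0 1))" unfolding fe2 using G2 z Mop00 by simp
  have base: "\<forall>x\<in>hom k 1. is_zero k (f 1 x)"
  proof
    fix x assume x: "x \<in> hom k 1"
    have "peq k (f 1 x) (padd (psmul (x (1,0)) (f 1 (E 1 0))) (psmul (x (0,1)) (f 1 (E 0 1))))"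
      using lin_at[OF Lf k1 E10_hom E01_hom, of "x (1,0)" "x (0,1)"] hom1_decomp[OF x] by simp
    moreover have "is_zero k (padd (psmul (x (1,0)) (f 1 (E 1 0))) (psmul (x (0,1)) (f 1 (E 0 1))))"
      by (rule iz_comb[OF i1 i2 iz1 iz2])
    ultimately show "is_zero k (f 1 x)" unfolding peq_def by (rule iz_cancel)
  qed
  show ?thesis by (rule det_zero[OF X base])
qed

lemma gp_zero:
  assumes k: "4 \<le> k" and p: "1 \<le> p" and X: "inG k X (int p)"
  shows "is_zero k X"
  using p X
proof (induction p arbitrary: X rule: nat_induct_at_least)
  case base
  obtain f where "X = Der 1 f" using inG_Der[of k X 1] base by auto
  then show ?case using g1_zero[of k f] base k by simp
next
  case (Suc n)
  obtain f where f: "X = Der (Suc n) f" using inG_Der[of k X "Suc n"] Suc by auto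
  have k1: "1 \<in> {1..k}" using k by simp
  have "\<forall>x\<in>hom k 1. is_zero k (f 1 x)"
  proof
    fix x assume "x \<in> hom k 1"
    then have "inG k (f 1 x) (int (Suc n) - int 1)" using inG1[of k "Suc n" f 1 x] Suc f k1 by simp
    then show "is_zero k (f 1 x)" using Suc.IH by simp
  qed
  then show ?case using det_zero[of k "Suc n" f] Suc f by simp
qed



theorem theorem6:
  fixes k :: nat
  assumes "k > 3"
  shows "(\<forall>p::nat. p \<ge> 1 \<longrightarrow> (\<forall>X. inG k X (int p) \<longrightarrow> is_zero k X))
       \<and> (\<forall>A. endo1 k A \<longrightarrow> (\<exists>X. inG k X 0 \<and> (\<forall>x\<in>hom k 1. peq k (act k X 1 x) (Neg (A x)))))
       \<and> (\<forall>X Y. inG k X 0 \<and> inG k Y 0 \<and> (\<forall>x\<in>hom k 1. peq k (act k X 1 x) (act k Y 1 x))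
              \<longrightarrow> peq k X Y)"
proof (intro conjI allI impI)
  have k: "4 \<le> k" using assms by simp
  fix p :: nat and X assume "1 \<le> p" "inG k X (int p)"
  then show "is_zero k X" using gp_zero[OF k] by blast
next
  fix A assume "endo1 k A"
  then show "\<exists>X. inG k X 0 \<and> (\<forall>x\<in>hom k 1. peq k (act k X 1 x) (Neg (A x)))"
    using part2[of k A] assms by simp
next
  fix X Y assume "inG k X 0 \<and> inG k Y 0 \<and> (\<forall>x\<in>hom k 1. peq k (act k X 1 x) (act k Y 1 x))"
  then show "peq k X Y" using part3 by blast
qed

end
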